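(* Let $\mathcal{G}=(\mathcal{V},\mathcal{E})$ be a connected time-invariant undirected graph on $\mathcal{V}=\{1,\dots,n\}$ with a fixed doubly stochastic weight matrix $\mathbf{W}=[w_{ij}]$ satisfying the standing weight conventions. Suppose each $\mu_i(0)\in\mathfrak{U}_2(\mathbb{R})$ is Gaussian with density $\mathcal{N}(p_i(0),P_i(0))$, $P_i(0)>0$, and that agents update by $\mu_i(t+1)=\operatorname{argmin}_{\eta\in\mathfrak{U}_2(\mathbb{R})}\sum_{j\in\mathcal{N}_i}w_{ij}\ell_2(\eta,\mu_j(t))^2$. Then each $\mu_i(t+1)$ is Gaussian with density $\mathcal{N}(p_i(t+1),P_i(t+1))$, where $$p_i(t+1)=\sum_{j\in\mathcal{N}_i}w_{ij}p_j(t),\qquad P_i^{1/2}(t+1)=\sum_{j\in\mathcal{N}_i}w_{ij}P_j^{1/2}(t).$$ Moreover, for every $i\in\mathcal{V}$, $\ell_2(\mu_i(t),\mu^\ast)\to0$ exponentially fast as $t\to\infty$, where $\mu^\ast=\operatorname{argmin}_{\eta\in\mathfrak{U}_2(\mathbb{R})}\frac1n\sum_{j\in\mathcal{V}}\ell_2(\eta,\mu_j(0))^2$.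
   Context: $\mathfrak{U}_2(\mathbb{R})$ is the set of Borel probability measures on $\mathbb{R}$ with finite second moment; $\ell_2(\mu,\nu)=\big(\inf_{\gamma\in\Gamma(\mu,\nu)}\int|x-y|^2d\gamma\big)^{1/2}$ is the 2-Wasserstein distance over couplings $\Gamma(\mu,\nu)$. $\mathcal{N}_i=\{j:(i,j)\in\mathcal{E}\}$ contains $i$; $w_{ij}>0$ iff $j\in\mathcal{N}_i$, $w_{ij}=0$ otherwise, $w_{ii}>0$, and doubly stochastic means all row sums and column sums equal $1$. Exponentially fast means there exist $C>0$, $\rho\in(0,1)$ with $\ell_2(\mu_i(t),\mu^\ast)\le C\rho^t$. *)

theory Defs
  imports "HOL-Probability.Probability"
begin

definition U2 :: "real measure \<Rightarrow> bool" where
  "U2 M \<longleftrightarrow> prob_space M \<and> sets M = sets borel \<and> integrable M (\<lambda>x. x\<^sup>2)"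

definition couplings :: "real measure \<Rightarrow> real measure \<Rightarrow> (real \<times> real) measure set" where
  "couplings \<mu> \<nu> = {\<gamma>. prob_space \<gamma> \<and> sets \<gamma> = sets (borel :: (real \<times> real) measure)
      \<and> distr \<gamma> borel fst = \<mu> \<and> distr \<gamma> borel snd = \<nu>}"

text \<open>2-Wasserstein distance (the infimum of the transport cost is taken in the
  extended nonnegative reals; it is finite on U2).\<close>
definition W2 :: "real measure \<Rightarrow> real measure \<Rightarrow> real" where
  "W2 \<mu> \<nu> = sqrt (enn2real (INF \<gamma> \<in> couplings \<mu> \<nu>. \<integral>\<^sup>+ z. ennreal ((fst z - snd z)\<^sup>2) \<partial>\<gamma>))"

definition gaussian :: "real \<Rightarrow> real \<Rightarrow> real measure" where
  "gaussian p P = density lborel (\<lambda>x. ennreal (normal_density p (sqrt P) x))"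

definition nbhd :: "(nat \<times> nat) set \<Rightarrow> nat \<Rightarrow> nat set" where
  "nbhd E i = {j. (i, j) \<in> E}"

definition connected_undirected_graph :: "nat \<Rightarrow> (nat \<times> nat) set \<Rightarrow> bool" where
  "connected_undirected_graph n E \<longleftrightarrow> n \<ge> 1 \<and> E \<subseteq> {..<n} \<times> {..<n} \<and> sym E
     \<and> (\<forall>i<n. (i, i) \<in> E) \<and> (\<forall>i<n. \<forall>j<n. (i, j) \<in> E\<^sup>*)"

definition adapted_doubly_stochastic :: "nat \<Rightarrow> (nat \<times> nat) set \<Rightarrow> (nat \<Rightarrow> nat \<Rightarrow> real) \<Rightarrow> bool" where
  "adapted_doubly_stochastic n E w \<longleftrightarrow>
     (\<forall>i<n. \<forall>j<n. (w i j > 0 \<longleftrightarrow> (i, j) \<in> E) \<and> ((i, j) \<notin> E \<longrightarrow> w i j = 0))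
     \<and> (\<forall>i<n. w i i > 0)
     \<and> (\<forall>i<n. (\<Sum>j<n. w i j) = 1) \<and> (\<forall>j<n. (\<Sum>i<n. w i j) = 1)"

definition is_argmin_U2 :: "(real measure \<Rightarrow> real) \<Rightarrow> real measure \<Rightarrow> bool" where
  "is_argmin_U2 F \<eta> \<longleftrightarrow> U2 \<eta> \<and> (\<forall>\<xi>. U2 \<xi> \<longrightarrow> F \<eta> \<le> F \<xi>)"

end

theory Submission
  imports Defs
begin

lemma gaussian_sets[simp]: "sets (gaussian p P) = sets borel"
  by (simp add: gaussian_def)

lemma gaussian_space[simp]: "space (gaussian p P) = UNIV"
  by (simp add: gaussian_def)

lemma gaussian_sq: "\<sigma> > 0 \<Longrightarrow> gaussian p (\<sigma>\<^sup>2) = density lborel (\<lambda>x. ennreal (normal_density p \<sigma> x))"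
  by (simp add: gaussian_def)

lemma gaussian_prob: "\<sigma> > 0 \<Longrightarrow> prob_space (gaussian p (\<sigma>\<^sup>2))"
  by (simp add: gaussian_sq prob_space_normal_density)

lemma gaussian_integrable:
  assumes s: "\<sigma> > 0" and f[measurable]: "f \<in> borel_measurable borel"
  shows "integrable (gaussian p (\<sigma>\<^sup>2)) f \<longleftrightarrow> integrable lborel (\<lambda>x. normal_density p \<sigma> x * f x)"
  unfolding gaussian_sq[OF s]
  by (subst integrable_density) auto

lemma gaussian_integral:
  assumes s: "\<sigma> > 0" and f[measurable]: "f \<in> borel_measurable borel"
  shows "integral\<^sup>L (gaussian p (\<sigma>\<^sup>2)) f = integral\<^sup>L lborel (\<lambda>x. normal_density p \<sigma> x * f x)"
  unfolding gaussian_sq[OF s]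
  by (subst integral_density) auto

lemma gaussian_int_x:
  assumes s: "\<sigma> > 0"
  shows "integrable (gaussian p (\<sigma>\<^sup>2)) (\<lambda>x. x)" "integral\<^sup>L (gaussian p (\<sigma>\<^sup>2)) (\<lambda>x. x) = p"
  using s by (simp_all add: gaussian_integrable gaussian_integral integrable_normal_moment_nz_1
      integral_normal_moment_nz_1)

lemma gaussian_int_sq:
  assumes s: "\<sigma> > 0"
  shows "integrable (gaussian p (\<sigma>\<^sup>2)) (\<lambda>x. (x - p)\<^sup>2)" "integral\<^sup>L (gaussian p (\<sigma>\<^sup>2)) (\<lambda>x. (x - p)\<^sup>2) = \<sigma>\<^sup>2"
proof -
  show "integrable (gaussian p (\<sigma>\<^sup>2)) (\<lambda>x. (x - p)\<^sup>2)"
    using s integrable_normal_moment[OF s, of p 2] by (simp add: gaussian_integrable)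
  show "integral\<^sup>L (gaussian p (\<sigma>\<^sup>2)) (\<lambda>x. (x - p)\<^sup>2) = \<sigma>\<^sup>2"
    using s integral_normal_moment_even[OF s, where k=1 and \<mu>=p] by (simp add: gaussian_integral)
qed

lemma gaussian_int_x2:
  assumes s: "\<sigma> > 0"
  shows "integrable (gaussian p (\<sigma>\<^sup>2)) (\<lambda>x. x\<^sup>2)"
proof -
  interpret prob_space "gaussian p (\<sigma>\<^sup>2)" by (rule gaussian_prob[OF s])
  have "integrable (gaussian p (\<sigma>\<^sup>2)) (\<lambda>x. (x - p)\<^sup>2 + 2 * p * x - p\<^sup>2)"
    using gaussian_int_sq(1)[OF s] gaussian_int_x(1)[OF s] by auto
  also have "(\<lambda>x. (x - p)\<^sup>2 + 2 * p * x - p\<^sup>2) = (\<lambda>x. x\<^sup>2)" by (auto simp: power2_eq_square algebra_simps)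
  finally show ?thesis .
qed

lemma U2_gaussian: "\<sigma> > 0 \<Longrightarrow> U2 (gaussian p (\<sigma>\<^sup>2))"
  unfolding U2_def using gaussian_prob gaussian_int_x2 by auto

lemma gaussian_affine:
  assumes s: "\<sigma> > 0" and k: "k > 0"
  shows "distr (gaussian p (\<sigma>\<^sup>2)) borel (\<lambda>y. m + k * (y - p)) = gaussian m ((k * \<sigma>)\<^sup>2)"
proof -
  interpret prob_space "gaussian p (\<sigma>\<^sup>2)" by (rule gaussian_prob[OF s])
  have D: "distributed (gaussian p (\<sigma>\<^sup>2)) lborel (\<lambda>x. x) (normal_density p \<sigma>)"
    unfolding distributed_def using s
    by (simp add: gaussian_sq distr_id2)
  have "distributed (gaussian p (\<sigma>\<^sup>2)) lborel (\<lambda>x. (m - k * p) + k * x) (normal_density ((m - k*p) + k * p) (\<bar>k\<bar> * \<sigma>))"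
    by (rule normal_density_affine[OF D s]) (use k in auto)
  then have "distr (gaussian p (\<sigma>\<^sup>2)) lborel (\<lambda>x. (m - k * p) + k * x) = density lborel (normal_density m (k * \<sigma>))"
    using k by (simp add: distributed_def)
  moreover have "distr (gaussian p (\<sigma>\<^sup>2)) borel (\<lambda>y. m + k * (y - p)) = distr (gaussian p (\<sigma>\<^sup>2)) lborel (\<lambda>x. (m - k * p) + k * x)"
    by (rule distr_cong) (auto simp: algebra_simps)
  ultimately show ?thesis using k s by (simp add: gaussian_sq)
qed

lemma abs_le_1_sq: "\<bar>x::real\<bar> \<le> 1 + x\<^sup>2"
proof (cases "\<bar>x\<bar> \<le> 1")
  case True then show ?thesis by (simp add: add_increasing2)
next
  case False then have "\<bar>x\<bar> \<le> \<bar>x\<bar> * \<bar>x\<bar>" using mult_right_mono[of 1 "\<bar>x\<bar>" "\<bar>x\<bar>"] by linarith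
  also have "\<bar>x\<bar> * \<bar>x\<bar> = x\<^sup>2" by (simp add: power2_eq_square)
  finally show ?thesis by simp
qed
lemma abs_prod_le_sq: "\<bar>(x::real) * y\<bar> \<le> x\<^sup>2 + y\<^sup>2"
proof -
  have "0 \<le> (\<bar>x\<bar> - \<bar>y\<bar>)\<^sup>2" by simp
  then have "2 * (\<bar>x\<bar> * \<bar>y\<bar>) \<le> x\<^sup>2 + y\<^sup>2" by (simp add: power2_eq_square algebra_simps)
  moreover have "0 \<le> \<bar>x\<bar> * \<bar>y\<bar>" by simp
  moreover have "\<bar>x * y\<bar> = \<bar>x\<bar> * \<bar>y\<bar>" by (rule abs_mult)
  ultimately show ?thesis by linarith
qed

lemma meas_pair:
  fixes \<gamma> :: "(real \<times> real) measure"
  assumes "sets \<gamma> = sets borel" and [measurable]: "f \<in> borel_measurable (borel \<Otimes>\<^sub>M borel)"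
  shows "f \<in> borel_measurable \<gamma>"
  using assms by (simp add: measurable_cong_sets[OF assms(1) refl] borel_prod)

lemma quad_int:
  fixes \<gamma> :: "(real \<times> real) measure"
  assumes P: "prob_space \<gamma>" and S: "sets \<gamma> = sets borel"
    and I1: "integrable \<gamma> (\<lambda>z. (fst z)\<^sup>2)" and I2: "integrable \<gamma> (\<lambda>z. (snd z)\<^sup>2)"
  shows "integrable \<gamma> (\<lambda>z. c0 + c1* fst z + c2* snd z + c3* (fst z)\<^sup>2 + c4* (snd z)\<^sup>2 + c5* (fst z* snd z))"
    and "integral\<^sup>L \<gamma> (\<lambda>z. c0 + c1* fst z + c2* snd z + c3* (fst z)\<^sup>2 + c4* (snd z)\<^sup>2 + c5* (fst z* snd z))
       = c0 + c1 * integral\<^sup>L \<gamma> fst + c2 * integral\<^sup>L \<gamma> snd + c3 * integral\<^sup>L \<gamma> (\<lambda>z. (fst z)\<^sup>2)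
          + c4 * integral\<^sup>L \<gamma> (\<lambda>z. (snd z)\<^sup>2) + c5 * integral\<^sup>L \<gamma> (\<lambda>z. fst z * snd z)"
proof -
  interpret prob_space \<gamma> by (rule P)
  have m1: "fst \<in> borel_measurable \<gamma>" "snd \<in> borel_measurable \<gamma>"
    "(\<lambda>z. fst z * snd z) \<in> borel_measurable \<gamma>"
    by (rule meas_pair[OF S]; measurable)+
  have J1: "integrable \<gamma> fst"
  proof (rule Bochner_Integration.integrable_bound[where f="\<lambda>z. 1 + (fst z)\<^sup>2"])
    show "integrable \<gamma> (\<lambda>z. 1 + (fst z)\<^sup>2)" using I1 by simp
    show "AE x in \<gamma>. norm (fst x) \<le> norm (1 + (fst x)\<^sup>2)"
      using abs_le_1_sq by (intro AE_I2) simp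
  qed (use m1 in auto)
  have J2: "integrable \<gamma> snd"
  proof (rule Bochner_Integration.integrable_bound[where f="\<lambda>z. 1 + (snd z)\<^sup>2"])
    show "integrable \<gamma> (\<lambda>z. 1 + (snd z)\<^sup>2)" using I2 by simp
    show "AE x in \<gamma>. norm (snd x) \<le> norm (1 + (snd x)\<^sup>2)"
      using abs_le_1_sq by (intro AE_I2) simp
  qed (use m1 in auto)
  have J3: "integrable \<gamma> (\<lambda>z. fst z * snd z)"
  proof (rule Bochner_Integration.integrable_bound[where f="\<lambda>z. (fst z)\<^sup>2 + (snd z)\<^sup>2"])
    show "integrable \<gamma> (\<lambda>z. (fst z)\<^sup>2 + (snd z)\<^sup>2)" using I1 I2 by simp
    show "AE x in \<gamma>. norm (fst x * snd x) \<le> norm ((fst x)\<^sup>2 + (snd x)\<^sup>2)"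
    proof (intro AE_I2)
      fix x :: "real \<times> real"
      have "\<bar>fst x * snd x\<bar> \<le> (fst x)\<^sup>2 + (snd x)\<^sup>2"
        by (rule abs_prod_le_sq)
      then show "norm (fst x * snd x) \<le> norm ((fst x)\<^sup>2 + (snd x)\<^sup>2)" by simp
    qed
  qed (use m1 in auto)
  show "integrable \<gamma> (\<lambda>z. c0 + c1* fst z + c2* snd z + c3* (fst z)\<^sup>2 + c4* (snd z)\<^sup>2 + c5* (fst z* snd z))"
    using I1 I2 J1 J2 J3 by simp
  show "integral\<^sup>L \<gamma> (\<lambda>z. c0 + c1* fst z + c2* snd z + c3* (fst z)\<^sup>2 + c4* (snd z)\<^sup>2 + c5* (fst z* snd z))
       = c0 + c1 * integral\<^sup>L \<gamma> fst + c2 * integral\<^sup>L \<gamma> snd + c3 * integral\<^sup>L \<gamma> (\<lambda>z. (fst z)\<^sup>2)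
          + c4 * integral\<^sup>L \<gamma> (\<lambda>z. (snd z)\<^sup>2) + c5 * integral\<^sup>L \<gamma> (\<lambda>z. fst z * snd z)"
    using I1 I2 J1 J2 J3 by (simp add: prob_space)
qed

lemma cs_real:
  fixes S T Q :: real
  assumes S: "S \<ge> 0" and T: "T \<ge> 0" and H: "\<And>a. a > 0 \<Longrightarrow> 2 * Q \<le> a * S + T / a"
  shows "Q \<le> sqrt S * sqrt T"
proof (cases "S > 0 \<and> T > 0")
  case True
  have "2 * Q \<le> (sqrt T / sqrt S) * S + T / (sqrt T / sqrt S)" using True by (intro H) simp
  also have "(sqrt T / sqrt S) * S = sqrt S * sqrt T"
    using True by (simp add: field_simps)
  also have "T / (sqrt T / sqrt S) = sqrt S * sqrt T"
    using True by (simp add: field_simps)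
  finally show ?thesis by simp
next
  case False
  show ?thesis
  proof (rule ccontr)
    assume "\<not> ?thesis"
    then have Qp: "Q > 0" using False S T by auto
    show False
    proof (cases "S = 0")
      case True
      have "2 * Q \<le> T / (T / Q + 1)" proof -
        have "0 < T / Q + 1" using Qp T by (simp add: add_nonneg_pos)
        then show ?thesis using H[of "T / Q + 1"] True by simp
      qed
      also have "T / (T / Q + 1) = T * Q / (T + Q)" using Qp by (simp add: field_simps)
      also have "\<dots> \<le> Q" using Qp T by (simp add: field_simps)
      finally show False using Qp by simp
    next
      case False
      then have S0: "S > 0" using S by simp
      with \<open>\<not> (S > 0 \<and> T > 0)\<close> T have T0: "T = 0" by simp
      have "2 * Q \<le> (Q / S) * S" using H[of "Q / S"] Qp S0 T0 by simp
      then show False using Qp S0 by simp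
    qed
  qed
qed

definition mean :: "real measure \<Rightarrow> real" where "mean \<eta> = (\<integral>x. x \<partial>\<eta>)"
definition vr :: "real measure \<Rightarrow> real" where "vr \<eta> = (\<integral>x. (x - mean \<eta>)\<^sup>2 \<partial>\<eta>)"

lemma coupling_basic:
  assumes "\<gamma> \<in> couplings \<eta> \<nu>"
  shows "prob_space \<gamma>" "sets \<gamma> = sets borel" "distr \<gamma> borel fst = \<eta>" "distr \<gamma> borel snd = \<nu>"
  using assms by (auto simp: couplings_def)

lemma coupling_fst:
  fixes f :: "real \<Rightarrow> real"
  assumes c: "\<gamma> \<in> couplings \<eta> \<nu>" and f[measurable]: "f \<in> borel_measurable borel"
  shows "integrable \<gamma> (\<lambda>z. f (fst z)) \<longleftrightarrow> integrable \<eta> f"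
    "integral\<^sup>L \<gamma> (\<lambda>z. f (fst z)) = integral\<^sup>L \<eta> f"
proof -
  have m: "fst \<in> measurable \<gamma> borel"
    by (rule meas_pair[OF coupling_basic(2)[OF c]]) measurable
  show "integrable \<gamma> (\<lambda>z. f (fst z)) \<longleftrightarrow> integrable \<eta> f"
    using integrable_distr_eq[OF m f] coupling_basic(3)[OF c] by simp
  show "integral\<^sup>L \<gamma> (\<lambda>z. f (fst z)) = integral\<^sup>L \<eta> f"
    using integral_distr[OF m f] coupling_basic(3)[OF c] by simp
qed

lemma coupling_snd:
  fixes f :: "real \<Rightarrow> real"
  assumes c: "\<gamma> \<in> couplings \<eta> \<nu>" and f[measurable]: "f \<in> borel_measurable borel"
  shows "integrable \<gamma> (\<lambda>z. f (snd z)) \<longleftrightarrow> integrable \<nu> f"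
    "integral\<^sup>L \<gamma> (\<lambda>z. f (snd z)) = integral\<^sup>L \<nu> f"
proof -
  have m: "snd \<in> measurable \<gamma> borel"
    by (rule meas_pair[OF coupling_basic(2)[OF c]]) measurable
  show "integrable \<gamma> (\<lambda>z. f (snd z)) \<longleftrightarrow> integrable \<nu> f"
    using integrable_distr_eq[OF m f] coupling_basic(4)[OF c] by simp
  show "integral\<^sup>L \<gamma> (\<lambda>z. f (snd z)) = integral\<^sup>L \<nu> f"
    using integral_distr[OF m f] coupling_basic(4)[OF c] by simp
qed

locale coup =
  fixes \<eta> \<nu> :: "real measure" and \<gamma> :: "(real \<times> real) measure"
  assumes U1: "U2 \<eta>" and U2': "U2 \<nu>" and c: "\<gamma> \<in> couplings \<eta> \<nu>"
begin

lemma P: "prob_space \<gamma>" and S: "sets \<gamma> = sets borel"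
  using coupling_basic[OF c] by auto

lemma I1: "integrable \<gamma> (\<lambda>z. (fst z)\<^sup>2)"
  using coupling_fst(1)[OF c, of "\<lambda>x. x\<^sup>2"] U1 by (simp add: U2_def)
lemma I2: "integrable \<gamma> (\<lambda>z. (snd z)\<^sup>2)"
  using coupling_snd(1)[OF c, of "\<lambda>x. x\<^sup>2"] U2' by (simp add: U2_def)

abbreviation "A \<equiv> integral\<^sup>L \<gamma> (\<lambda>z. (fst z)\<^sup>2)"
abbreviation "B \<equiv> integral\<^sup>L \<gamma> fst"
abbreviation "C \<equiv> integral\<^sup>L \<gamma> (\<lambda>z. (snd z)\<^sup>2)"
abbreviation "D \<equiv> integral\<^sup>L \<gamma> snd"
abbreviation "K \<equiv> integral\<^sup>L \<gamma> (\<lambda>z. fst z * snd z)"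

lemmas QI = quad_int[OF P S I1 I2]

lemma quad_eq:
  assumes "\<And>z. f z = c0 + c1 * fst z + c2 * snd z + c3 * (fst z)\<^sup>2 + c4 * (snd z)\<^sup>2 + c5 * (fst z * snd z)"
  shows "integrable \<gamma> f" "integral\<^sup>L \<gamma> f = c0 + c1 * B + c2 * D + c3 * A + c4 * C + c5 * K"
proof -
  have "f = (\<lambda>z. c0 + c1 * fst z + c2 * snd z + c3 * (fst z)\<^sup>2 + c4 * (snd z)\<^sup>2 + c5 * (fst z * snd z))"
    using assms by auto
  then show "integrable \<gamma> f" "integral\<^sup>L \<gamma> f = c0 + c1 * B + c2 * D + c3 * A + c4 * C + c5 * K"
    using QI by simp_all
qed

lemma mean1: "mean \<eta> = B"
  using coupling_fst(2)[OF c, of "\<lambda>x. x"] by (simp add: mean_def)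
lemma mean2: "mean \<nu> = D"
  using coupling_snd(2)[OF c, of "\<lambda>x. x"] by (simp add: mean_def)

lemma vr1: "vr \<eta> = A - B\<^sup>2"
proof -
  have "vr \<eta> = integral\<^sup>L \<gamma> (\<lambda>z. (fst z - B)\<^sup>2)"
    using coupling_fst(2)[OF c, of "\<lambda>x. (x - B)\<^sup>2"] by (simp add: vr_def mean1)
  also have "\<dots> = B\<^sup>2 + (-2*B) * B + 0 * D + 1 * A + 0 * C + 0 * K"
    by (rule quad_eq) (simp add: power2_eq_square algebra_simps)
  finally show ?thesis by (simp add: power2_eq_square)
qed

lemma vr2: "vr \<nu> = C - D\<^sup>2"
proof -
  have "vr \<nu> = integral\<^sup>L \<gamma> (\<lambda>z. (snd z - D)\<^sup>2)"
    using coupling_snd(2)[OF c, of "\<lambda>x. (x - D)\<^sup>2"] by (simp add: vr_def mean2)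
  also have "\<dots> = D\<^sup>2 + 0 * B + (-2*D) * D + 0 * A + 1 * C + 0 * K"
    by (rule quad_eq) (simp add: power2_eq_square algebra_simps)
  finally show ?thesis by (simp add: power2_eq_square)
qed

lemma vr1_nn: "vr \<eta> \<ge> 0"
  unfolding vr_def by simp
lemma vr2_nn: "vr \<nu> \<ge> 0"
  unfolding vr_def by simp

lemma cost: "integrable \<gamma> (\<lambda>z. (fst z - snd z)\<^sup>2)" "integral\<^sup>L \<gamma> (\<lambda>z. (fst z - snd z)\<^sup>2) = A + C - 2 * K"
proof -
  have e: "\<And>z. (fst z - snd z)\<^sup>2 = 0 + 0 * fst z + 0 * snd z + 1 * (fst z)\<^sup>2 + 1 * (snd z)\<^sup>2 + (-2::real) * (fst z * snd z)"
    by (simp add: power2_eq_square algebra_simps)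
  show "integrable \<gamma> (\<lambda>z. (fst z - snd z)\<^sup>2)" by (rule quad_eq(1)[OF e])
  show "integral\<^sup>L \<gamma> (\<lambda>z. (fst z - snd z)\<^sup>2) = A + C - 2 * K"
    using quad_eq(2)[OF e] by simp
qed

lemma cov_bound: "K - B * D \<le> sqrt (vr \<eta>) * sqrt (vr \<nu>)"
proof (rule cs_real)
  show "vr \<eta> \<ge> 0" "vr \<nu> \<ge> 0" by (rule vr1_nn, rule vr2_nn)
  fix a :: real assume a: "a > 0"
  have e1: "\<And>z. 2 * ((fst z - B) * (snd z - D)) = 2 * B * D + (-2 * D) * fst z + (-2 * B) * snd z + 0 * (fst z)\<^sup>2 + 0 * (snd z)\<^sup>2 + 2 * (fst z * snd z)"
    by (simp add: power2_eq_square algebra_simps)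
  have e2: "\<And>z. a * (fst z - B)\<^sup>2 + (snd z - D)\<^sup>2 / a = (a * B\<^sup>2 + D\<^sup>2 / a) + (-2 * a * B) * fst z + (-2 * D / a) * snd z + a * (fst z)\<^sup>2 + (1/a) * (snd z)\<^sup>2 + 0 * (fst z * snd z)"
    using a by (simp add: power2_eq_square field_simps)
  have "integral\<^sup>L \<gamma> (\<lambda>z. 2 * ((fst z - B) * (snd z - D))) \<le> integral\<^sup>L \<gamma> (\<lambda>z. a * (fst z - B)\<^sup>2 + (snd z - D)\<^sup>2 / a)"
  proof (rule integral_mono[OF quad_eq(1)[OF e1] quad_eq(1)[OF e2]])
    fix z :: "real \<times> real"
    have "0 \<le> (a * (fst z - B) - (snd z - D))\<^sup>2 / a" using a by simp
    also have "\<dots> = a * (fst z - B)\<^sup>2 + (snd z - D)\<^sup>2 / a - 2 * ((fst z - B) * (snd z - D))"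
      using a by (simp add: power2_eq_square field_simps)
    finally show "2 * ((fst z - B) * (snd z - D)) \<le> a * (fst z - B)\<^sup>2 + (snd z - D)\<^sup>2 / a" by simp
  qed
  also have "integral\<^sup>L \<gamma> (\<lambda>z. a * (fst z - B)\<^sup>2 + (snd z - D)\<^sup>2 / a) = (a * B\<^sup>2 + D\<^sup>2 / a) + (-2 * a * B) * B + (-2 * D / a) * D + a * A + (1/a) * C + 0 * K"
    by (rule quad_eq(2)[OF e2])
  also have "\<dots> = a * vr \<eta> + vr \<nu> / a"
    using a by (simp add: vr1 vr2 power2_eq_square field_simps)
  finally show "2 * (K - B * D) \<le> a * vr \<eta> + vr \<nu> / a"
    using quad_eq(2)[OF e1] by (simp add: algebra_simps)
qed

lemma cost_lower: "(mean \<eta> - mean \<nu>)\<^sup>2 + (sqrt (vr \<eta>) - sqrt (vr \<nu>))\<^sup>2 \<le> integral\<^sup>L \<gamma> (\<lambda>z. (fst z - snd z)\<^sup>2)"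
proof -
  have "(sqrt (vr \<eta>) - sqrt (vr \<nu>))\<^sup>2 = vr \<eta> + vr \<nu> - 2 * (sqrt (vr \<eta>) * sqrt (vr \<nu>))"
    using vr1_nn vr2_nn by (simp add: power2_eq_square algebra_simps)
  moreover have "(mean \<eta> - mean \<nu>)\<^sup>2 = B\<^sup>2 - 2 * (B * D) + D\<^sup>2"
    by (simp add: mean1 mean2 power2_eq_square algebra_simps)
  ultimately show ?thesis using cov_bound cost(2) vr1 vr2 by linarith
qed

end

lemma prod_coupling:
  assumes U: "U2 \<eta>" "U2 \<nu>"
  shows "\<eta> \<Otimes>\<^sub>M \<nu> \<in> couplings \<eta> \<nu>"
proof -
  have p1: "prob_space \<eta>" and p2: "prob_space \<nu>" and s1: "sets \<eta> = sets borel" and s2: "sets \<nu> = sets borel"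
    using U by (auto simp: U2_def)
  interpret P: pair_prob_space \<eta> \<nu>
    using p1 p2 by (simp add: pair_prob_space_def pair_sigma_finite_def prob_space_imp_sigma_finite)
  have sp: "sets (\<eta> \<Otimes>\<^sub>M \<nu>) = sets (borel :: (real \<times> real) measure)"
  proof -
    have "sets (\<eta> \<Otimes>\<^sub>M \<nu>) = sets (borel \<Otimes>\<^sub>M borel :: (real \<times> real) measure)"
      using sets_pair_measure_cong[OF s1 s2] .
    also have "(borel \<Otimes>\<^sub>M borel :: (real \<times> real) measure) = borel" by (rule borel_prod)
    finally show ?thesis .
  qed
  have sp1: "space \<eta> = UNIV" "space \<nu> = UNIV"
    using sets_eq_imp_space_eq[OF s1] sets_eq_imp_space_eq[OF s2] by simp_all
  have d1: "distr (\<eta> \<Otimes>\<^sub>M \<nu>) borel fst = \<eta>"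
  proof -
    have "distr (\<eta> \<Otimes>\<^sub>M \<nu>) borel fst = distr (\<eta> \<Otimes>\<^sub>M \<nu>) \<eta> fst"
      by (rule distr_cong) (simp_all add: s1)
    also have "\<dots> = \<eta>" by (rule P.M2.distr_pair_fst)
    finally show ?thesis .
  qed
  have d2: "distr (\<eta> \<Otimes>\<^sub>M \<nu>) borel snd = \<nu>"
  proof -
    have "distr (\<eta> \<Otimes>\<^sub>M \<nu>) borel snd = distr (\<eta> \<Otimes>\<^sub>M \<nu>) \<nu> snd"
      by (rule distr_cong) (simp_all add: s2)
    also have "\<dots> = \<nu>"
    proof (intro measure_eqI)
      fix A assume A: "A \<in> sets (distr (\<eta> \<Otimes>\<^sub>M \<nu>) \<nu> snd)"
      then have A': "A \<in> sets \<nu>" by simp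
      have ms: "snd \<in> measurable (\<eta> \<Otimes>\<^sub>M \<nu>) \<nu>" by simp
      have "emeasure (distr (\<eta> \<Otimes>\<^sub>M \<nu>) \<nu> snd) A = emeasure (\<eta> \<Otimes>\<^sub>M \<nu>) (snd -` A \<inter> space (\<eta> \<Otimes>\<^sub>M \<nu>))"
        by (rule emeasure_distr[OF ms A'])
      also have "snd -` A \<inter> space (\<eta> \<Otimes>\<^sub>M \<nu>) = space \<eta> \<times> A"
        using sp1 by (auto simp: space_pair_measure)
      also have "emeasure (\<eta> \<Otimes>\<^sub>M \<nu>) (space \<eta> \<times> A) = emeasure \<eta> (space \<eta>) * emeasure \<nu> A"
        by (rule P.M2.emeasure_pair_measure_Times) (simp_all add: A')
      finally show "emeasure (distr (\<eta> \<Otimes>\<^sub>M \<nu>) \<nu> snd) A = emeasure \<nu> A"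
        by (simp add: P.M1.emeasure_space_1)
    qed simp
    finally show ?thesis .
  qed
  show ?thesis unfolding couplings_def using sp d1 d2 P.prob_space_axioms by auto
qed

abbreviation cost :: "(real \<times> real) measure \<Rightarrow> real" where
  "cost \<gamma> \<equiv> integral\<^sup>L \<gamma> (\<lambda>z. (fst z - snd z)\<^sup>2)"

abbreviation Icost :: "real measure \<Rightarrow> real measure \<Rightarrow> ennreal" where
  "Icost \<eta> \<nu> \<equiv> (INF \<gamma> \<in> couplings \<eta> \<nu>. \<integral>\<^sup>+ z. ennreal ((fst z - snd z)\<^sup>2) \<partial>\<gamma>)"

lemma nn_cost:
  assumes "U2 \<eta>" "U2 \<nu>" "\<gamma> \<in> couplings \<eta> \<nu>"
  shows "(\<integral>\<^sup>+ z. ennreal ((fst z - snd z)\<^sup>2) \<partial>\<gamma>) = ennreal (cost \<gamma>)"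
proof -
  interpret coup \<eta> \<nu> \<gamma> using assms by unfold_locales
  show ?thesis by (rule nn_integral_eq_integral[OF cost(1)]) auto
qed

lemma Icost_finite:
  assumes "U2 \<eta>" "U2 \<nu>"
  shows "Icost \<eta> \<nu> < top"
proof -
  have "Icost \<eta> \<nu> \<le> ennreal (cost (\<eta> \<Otimes>\<^sub>M \<nu>))"
    unfolding nn_cost[OF assms prod_coupling[OF assms], symmetric] by (rule INF_lower[OF prod_coupling[OF assms]])
  also have "\<dots> < top" by simp
  finally show ?thesis .
qed

lemma W2_sq:
  shows "(W2 \<eta> \<nu>)\<^sup>2 = enn2real (Icost \<eta> \<nu>)"
  unfolding W2_def by simp

lemma W2_lower:
  assumes "U2 \<eta>" "U2 \<nu>"
  shows "(mean \<eta> - mean \<nu>)\<^sup>2 + (sqrt (vr \<eta>) - sqrt (vr \<nu>))\<^sup>2 \<le> (W2 \<eta> \<nu>)\<^sup>2"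
proof -
  let ?L = "(mean \<eta> - mean \<nu>)\<^sup>2 + (sqrt (vr \<eta>) - sqrt (vr \<nu>))\<^sup>2"
  have "ennreal ?L \<le> Icost \<eta> \<nu>"
  proof (rule INF_greatest)
    fix \<gamma> assume g: "\<gamma> \<in> couplings \<eta> \<nu>"
    interpret coup \<eta> \<nu> \<gamma> using assms g by unfold_locales
    show "ennreal ?L \<le> (\<integral>\<^sup>+ z. ennreal ((fst z - snd z)\<^sup>2) \<partial>\<gamma>)"
      unfolding nn_cost[OF assms g] using cost_lower by (rule ennreal_leI)
  qed
  then have "enn2real (ennreal ?L) \<le> enn2real (Icost \<eta> \<nu>)"
    by (rule enn2real_mono) (rule Icost_finite[OF assms])
  moreover have "enn2real (ennreal ?L) = ?L" by (rule enn2real_ennreal) simp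
  ultimately show ?thesis by (simp only: W2_sq)
qed

lemma W2_upper:
  assumes "U2 \<eta>" "U2 \<nu>" "\<gamma> \<in> couplings \<eta> \<nu>"
  shows "(W2 \<eta> \<nu>)\<^sup>2 \<le> cost \<gamma>"
proof -
  have "Icost \<eta> \<nu> \<le> ennreal (cost \<gamma>)"
    unfolding nn_cost[OF assms, symmetric] by (rule INF_lower[OF assms(3)])
  then have "enn2real (Icost \<eta> \<nu>) \<le> enn2real (ennreal (cost \<gamma>))"
    by (rule enn2real_mono) simp
  then show ?thesis by (simp add: W2_sq)
qed

lemma W2_approx:
  assumes "U2 \<eta>" "U2 \<nu>" "\<epsilon> > 0"
  shows "\<exists>\<gamma>\<in>couplings \<eta> \<nu>. cost \<gamma> < (W2 \<eta> \<nu>)\<^sup>2 + \<epsilon>"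
proof -
  have fin: "Icost \<eta> \<nu> < top" by (rule Icost_finite[OF assms(1,2)])
  have "Icost \<eta> \<nu> < ennreal ((W2 \<eta> \<nu>)\<^sup>2 + \<epsilon>)"
  proof -
    have "Icost \<eta> \<nu> = ennreal (enn2real (Icost \<eta> \<nu>))" using fin by simp
    also have "\<dots> < ennreal ((W2 \<eta> \<nu>)\<^sup>2 + \<epsilon>)"
      using assms(3) by (intro ennreal_lessI) (auto simp: W2_sq add_nonneg_pos)
    finally show ?thesis .
  qed
  then obtain \<gamma> where g: "\<gamma> \<in> couplings \<eta> \<nu>"
    and lt: "(\<integral>\<^sup>+ z. ennreal ((fst z - snd z)\<^sup>2) \<partial>\<gamma>) < ennreal ((W2 \<eta> \<nu>)\<^sup>2 + \<epsilon>)"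
    by (auto simp: INF_less_iff)
  have "cost \<gamma> < (W2 \<eta> \<nu>)\<^sup>2 + \<epsilon>"
    using lt nn_cost[OF assms(1,2) g] by (simp add: ennreal_less_iff)
  with g show ?thesis by blast
qed

lemma gauss_mean: "\<sigma> > 0 \<Longrightarrow> mean (gaussian p (\<sigma>\<^sup>2)) = p"
  using gaussian_int_x by (simp add: mean_def)

lemma gauss_vr: "\<sigma> > 0 \<Longrightarrow> vr (gaussian p (\<sigma>\<^sup>2)) = \<sigma>\<^sup>2"
  using gaussian_int_sq by (simp add: vr_def gauss_mean)

lemma gauss_sd: "\<sigma> > 0 \<Longrightarrow> sqrt (vr (gaussian p (\<sigma>\<^sup>2))) = \<sigma>"
  by (simp add: gauss_vr)

lemma fst_borel[measurable]: "fst \<in> borel_measurable (borel :: (real \<times> real) measure)"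
  by (subst borel_prod[symmetric]) (rule measurable_fst)
lemma snd_borel[measurable]: "snd \<in> borel_measurable (borel :: (real \<times> real) measure)"
  by (subst borel_prod[symmetric]) (rule measurable_snd)

lemma W2_gauss:
  assumes a: "\<alpha> > 0" and b: "\<beta> > 0"
  shows "(W2 (gaussian pa (\<alpha>\<^sup>2)) (gaussian pb (\<beta>\<^sup>2)))\<^sup>2 = (pa - pb)\<^sup>2 + (\<alpha> - \<beta>)\<^sup>2"
proof (rule antisym)
  let ?Ga = "gaussian pa (\<alpha>\<^sup>2)" and ?Gb = "gaussian pb (\<beta>\<^sup>2)"
  define k where "k = \<beta> / \<alpha>"
  have k: "k > 0" using a b by (simp add: k_def)
  define f where "f = (\<lambda>x::real. (x, pb + k * (x - pa)))"
  define \<gamma> where "\<gamma> = distr ?Ga borel f"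
  have Ua: "U2 ?Ga" and Ub: "U2 ?Gb" using U2_gaussian a b by auto
  interpret Pa: prob_space ?Ga using gaussian_prob[OF a] .
  have fm[measurable]: "f \<in> borel_measurable borel" unfolding f_def by measurable
  have fm': "f \<in> measurable ?Ga borel"
    using fm by (simp add: measurable_cong_sets[OF gaussian_sets refl])
  have c: "\<gamma> \<in> couplings ?Ga ?Gb"
    unfolding couplings_def
  proof (intro CollectI conjI)
    show "prob_space \<gamma>" unfolding \<gamma>_def by (rule Pa.prob_space_distr[OF fm'])
    show "sets \<gamma> = sets borel" unfolding \<gamma>_def by simp
    have "distr \<gamma> borel fst = distr ?Ga borel (fst \<circ> f)"
      unfolding \<gamma>_def by (rule distr_distr[OF _ fm']) simp
    also have "fst \<circ> f = (\<lambda>x. x)" by (auto simp: f_def)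
    also have "distr ?Ga borel (\<lambda>x. x) = ?Ga" by (rule distr_id2) simp
    finally show "distr \<gamma> borel fst = ?Ga" .
    have "distr \<gamma> borel snd = distr ?Ga borel (snd \<circ> f)"
      unfolding \<gamma>_def by (rule distr_distr[OF _ fm']) simp
    also have "snd \<circ> f = (\<lambda>x. pb + k * (x - pa))" by (auto simp: f_def)
    also have "distr ?Ga borel (\<lambda>x. pb + k * (x - pa)) = gaussian pb ((k * \<alpha>)\<^sup>2)"
      by (rule gaussian_affine[OF a k])
    also have "k * \<alpha> = \<beta>" using a by (simp add: k_def)
    finally show "distr \<gamma> borel snd = ?Gb" .
  qed
  have "(W2 ?Ga ?Gb)\<^sup>2 \<le> cost \<gamma>" by (rule W2_upper[OF Ua Ub c])
  also have "cost \<gamma> = integral\<^sup>L ?Ga (\<lambda>x. (x - (pb + k * (x - pa)))\<^sup>2)"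
    unfolding \<gamma>_def by (subst integral_distr[OF fm']) (simp_all add: f_def)
  also have "\<dots> = integral\<^sup>L ?Ga (\<lambda>x. (1 - k)\<^sup>2 * (x - pa)\<^sup>2 + (2 * (1 - k) * (pa - pb)) * x + ((pa - pb)\<^sup>2 - 2 * (1 - k) * (pa - pb) * pa))"
    by (rule Bochner_Integration.integral_cong) (simp_all add: power2_eq_square algebra_simps)
  also have "\<dots> = (1 - k)\<^sup>2 * \<alpha>\<^sup>2 + (pa - pb)\<^sup>2"
    using gaussian_int_sq[OF a, of pa] gaussian_int_x[OF a, of pa]
    using Pa.prob_space by (simp add: algebra_simps)
  also have "(1 - k)\<^sup>2 * \<alpha>\<^sup>2 = (\<alpha> - \<beta>)\<^sup>2"
    using a by (simp add: k_def power2_eq_square field_simps)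
  finally show "(W2 ?Ga ?Gb)\<^sup>2 \<le> (pa - pb)\<^sup>2 + (\<alpha> - \<beta>)\<^sup>2" by simp
  show "(pa - pb)\<^sup>2 + (\<alpha> - \<beta>)\<^sup>2 \<le> (W2 ?Ga ?Gb)\<^sup>2"
    using W2_lower[OF Ua Ub] by (simp add: gauss_mean gauss_sd a b)
qed

lemma iexp_diff: "cmod (iexp a - iexp b) \<le> \<bar>a - b\<bar>"
proof -
  have "iexp a - iexp b = iexp b * (iexp (a - b) - 1)"
    by (simp add: algebra_simps exp_add[symmetric])
  then have "cmod (iexp a - iexp b) = cmod (iexp (a - b) - 1)"
    by (simp add: norm_mult)
  also have "\<dots> \<le> \<bar>a - b\<bar>" using iexp_approx1[of "a - b" 0] by simp
  finally show ?thesis .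
qed

lemma eps_le:
  fixes X c d :: real
  assumes c: "c \<ge> 0" and H: "\<And>\<epsilon>. \<epsilon> > 0 \<Longrightarrow> X \<le> c * \<epsilon> + d"
  shows "X \<le> d"
proof (rule ccontr)
  assume "\<not> X \<le> d"
  then have g: "X - d > 0" by simp
  define \<epsilon> where "\<epsilon> = (X - d) / (2 * (c + 1))"
  have e: "\<epsilon> > 0" using g c by (simp add: \<epsilon>_def)
  have "c * \<epsilon> \<le> (c + 1) * \<epsilon>" using e by simp
  also have "\<dots> = (X - d) / 2"
  proof -
    have "c + 1 \<noteq> 0" using c by simp
    then show ?thesis unfolding \<epsilon>_def by (simp add: field_simps)
  qed
  finally show False using H[OF e] g by simp
qed

lemma amgm_abs:
  fixes u t \<delta> :: real
  assumes "\<delta> > 0"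
  shows "\<bar>t * u\<bar> \<le> t\<^sup>2 / (2 * \<delta>) * u\<^sup>2 + \<delta> / 2"
proof -
  have "0 \<le> (\<bar>t * u\<bar> - \<delta>)\<^sup>2" by simp
  then have "2 * \<delta> * \<bar>t * u\<bar> \<le> \<bar>t * u\<bar>\<^sup>2 + \<delta>\<^sup>2" by (simp add: power2_eq_square algebra_simps)
  also have "\<bar>t * u\<bar>\<^sup>2 = t\<^sup>2 * u\<^sup>2" by (simp add: power_mult_distrib)
  finally have "2 * \<delta> * \<bar>t * u\<bar> \<le> t\<^sup>2 * u\<^sup>2 + \<delta>\<^sup>2" .
  then show ?thesis using assms by (simp add: field_simps power2_eq_square)
qed

lemma gauss_unique:
  assumes U: "U2 \<eta>" and \<sigma>: "\<sigma> > 0" and s: "vr \<eta> > 0"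
    and W: "(W2 \<eta> (gaussian p (\<sigma>\<^sup>2)))\<^sup>2 \<le> (mean \<eta> - p)\<^sup>2 + (sqrt (vr \<eta>) - \<sigma>)\<^sup>2"
  shows "\<eta> = gaussian (mean \<eta>) ((sqrt (vr \<eta>))\<^sup>2)"
proof -
  define m where "m = mean \<eta>"
  define sd where "sd = sqrt (vr \<eta>)"
  define \<nu> where "\<nu> = gaussian p (\<sigma>\<^sup>2)"
  define k where "k = sd / \<sigma>"
  define G where "G = gaussian m (sd\<^sup>2)"
  have sd: "sd > 0" using s by (simp add: sd_def)
  have k: "k > 0" using sd \<sigma> by (simp add: k_def)
  have ksd: "k * \<sigma> = sd" using \<sigma> by (simp add: k_def)
  have Uv: "U2 \<nu>" unfolding \<nu>_def by (rule U2_gaussian[OF \<sigma>])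
  have rd1: "real_distribution \<eta>"
    using U by (simp add: U2_def real_distribution_def real_distribution_axioms_def)
  have rd2: "real_distribution G"
    using gaussian_prob[OF sd] by (simp add: G_def real_distribution_def real_distribution_axioms_def)
  have Gaff: "G = distr \<nu> borel (\<lambda>y. m + k * (y - p))"
    unfolding G_def \<nu>_def using gaussian_affine[OF \<sigma> k, of p m] ksd by simp
  have main: "cmod (char \<eta> t - char G t) \<le> \<delta> / 2" if d: "\<delta> > 0" for t \<delta>
  proof (rule eps_le[where c = "t\<^sup>2 / (2 * \<delta>) * k"])
    show "0 \<le> t\<^sup>2 / (2 * \<delta>) * k" using d k by simp
    fix \<epsilon> :: real assume e: "\<epsilon> > 0"
    obtain \<gamma> where c: "\<gamma> \<in> couplings \<eta> \<nu>" and lt: "cost \<gamma> < (W2 \<eta> \<nu>)\<^sup>2 + \<epsilon>"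
      using W2_approx[OF U Uv e] by blast
    interpret coup \<eta> \<nu> \<gamma> using U Uv c by unfold_locales
    interpret Pg: prob_space \<gamma> by (rule P)
    have mv: "mean \<nu> = p" and vv: "vr \<nu> = \<sigma>\<^sup>2" unfolding \<nu>_def using \<sigma> by (simp_all add: gauss_mean gauss_vr)
    have Bm: "B = m" using mean1 by (simp add: m_def)
    have Dp: "D = p" using mean2 mv by simp
    have Aeq: "A = sd\<^sup>2 + m\<^sup>2" using vr1 s Bm by (simp add: sd_def)
    have Ceq: "C = \<sigma>\<^sup>2 + p\<^sup>2" using vr2 vv Dp by simp
    define Zf where "Zf = (\<lambda>z::real\<times>real. (fst z - (m + k * (snd z - p)))\<^sup>2)"
    have eZ: "\<And>z. Zf z = (k * p - m)\<^sup>2 + (2 * (k * p - m)) * fst z + (- 2 * k * (k * p - m)) * snd z + 1 * (fst z)\<^sup>2 + k\<^sup>2 * (snd z)\<^sup>2 + (- 2 * k) * (fst z * snd z)"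
      unfolding Zf_def by (simp add: power2_eq_square algebra_simps)
    have Zi: "integrable \<gamma> Zf" by (rule quad_eq(1)[OF eZ])
    have "integral\<^sup>L \<gamma> Zf = (k * p - m)\<^sup>2 + (2 * (k * p - m)) * B + (- 2 * k * (k * p - m)) * D + 1 * A + k\<^sup>2 * C + (- 2 * k) * K"
      by (rule quad_eq(2)[OF eZ])
    also have "\<dots> = k * (cost \<gamma> - ((m - p)\<^sup>2 + (sd - \<sigma>)\<^sup>2))"
      unfolding cost(2) Aeq Ceq Bm Dp using ksd[symmetric]
      by (simp add: power2_eq_square algebra_simps)
    also have "\<dots> \<le> k * \<epsilon>"
      using lt W k unfolding \<nu>_def m_def sd_def by (intro mult_left_mono) simp_all
    finally have Zle: "integral\<^sup>L \<gamma> Zf \<le> k * \<epsilon>" .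
    have mfst: "fst \<in> measurable \<gamma> borel" by (rule meas_pair[OF S]) measurable
    have msnd: "snd \<in> measurable \<gamma> borel" by (rule meas_pair[OF S]) measurable
    define w where "w = (\<lambda>z::real\<times>real. m + k * (snd z - p))"
    have mw: "w \<in> measurable \<gamma> borel" unfolding w_def using msnd by measurable
    have ch1: "char \<eta> t = (CLINT z|\<gamma>. iexp (t * fst z))"
      unfolding char_def using integral_distr[OF mfst, of "\<lambda>x. iexp (t * x)"] coupling_basic(3)[OF c]
      by simp
    have "G = distr \<gamma> borel ((\<lambda>y. m + k * (y - p)) \<circ> snd)"
      unfolding Gaff coupling_basic(4)[OF c, symmetric] by (rule distr_distr[OF _ msnd]) simp
    also have "(\<lambda>y. m + k * (y - p)) \<circ> snd = w" by (auto simp: w_def)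
    finally have Gw: "G = distr \<gamma> borel w" .
    have ch2: "char G t = (CLINT z|\<gamma>. iexp (t * w z))"
      unfolding char_def Gw using integral_distr[OF mw, of "\<lambda>x. iexp (t * x)"] by simp
    have i1: "integrable \<gamma> (\<lambda>z. iexp (t * fst z))"
      by (rule Pg.integrable_const_bound[where B=1]) (use mfst in \<open>simp_all add: norm_exp_i_times[of "t * fst _", simplified]\<close>)
    have i2: "integrable \<gamma> (\<lambda>z. iexp (t * w z))"
      by (rule Pg.integrable_const_bound[where B=1]) (use mw in \<open>simp_all add: norm_exp_i_times[of "t * w _", simplified]\<close>)
    have "char \<eta> t - char G t = (CLINT z|\<gamma>. iexp (t * fst z) - iexp (t * w z))"
      unfolding ch1 ch2 using i1 i2 by simp
    also have "cmod \<dots> \<le> integral\<^sup>L \<gamma> (\<lambda>z. t\<^sup>2 / (2 * \<delta>) * Zf z + \<delta> / 2)"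
    proof (rule Bochner_Integration.integral_norm_bound_integral)
      show "integrable \<gamma> (\<lambda>z. iexp (t * fst z) - iexp (t * w z))" using i1 i2 by simp
      show "integrable \<gamma> (\<lambda>z. t\<^sup>2 / (2 * \<delta>) * Zf z + \<delta> / 2)" using Zi by simp
      fix z :: "real \<times> real"
      have "cmod (iexp (t * fst z) - iexp (t * w z)) \<le> \<bar>t * fst z - t * w z\<bar>" by (rule iexp_diff)
      also have "\<bar>t * fst z - t * w z\<bar> = \<bar>t * (fst z - w z)\<bar>" by (simp add: algebra_simps)
      also have "\<dots> \<le> t\<^sup>2 / (2 * \<delta>) * (fst z - w z)\<^sup>2 + \<delta> / 2" by (rule amgm_abs[OF d])
      also have "(fst z - w z)\<^sup>2 = Zf z" by (simp add: Zf_def w_def)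
      finally show "cmod (iexp (t * fst z) - iexp (t * w z)) \<le> t\<^sup>2 / (2 * \<delta>) * Zf z + \<delta> / 2" .
    qed
    also have "integral\<^sup>L \<gamma> (\<lambda>z. t\<^sup>2 / (2 * \<delta>) * Zf z + \<delta> / 2) = t\<^sup>2 / (2 * \<delta>) * integral\<^sup>L \<gamma> Zf + \<delta> / 2"
      using Zi Pg.prob_space by simp
    also have "\<dots> \<le> t\<^sup>2 / (2 * \<delta>) * (k * \<epsilon>) + \<delta> / 2"
      using Zle d by (intro add_right_mono mult_left_mono) simp_all
    finally show "cmod (char \<eta> t - char G t) \<le> t\<^sup>2 / (2 * \<delta>) * k * \<epsilon> + \<delta> / 2" by simp
  qed
  have "char \<eta> = char G"
  proof
    fix t
    have H: "\<And>\<delta>. \<delta> > 0 \<Longrightarrow> cmod (char \<eta> t - char G t) \<le> 1 * \<delta> + 0"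
      using main by (smt (verit, best) field_sum_of_halves)
    have "cmod (char \<eta> t - char G t) \<le> 0"
      by (rule eps_le[OF _ H]) simp_all
    then show "char \<eta> t = char G t" by simp
  qed
  then have "\<eta> = G" by (rule Levy_uniqueness[OF rd1 rd2])
  then show ?thesis by (simp add: G_def m_def sd_def)
qed

lemma quad_sum:
  fixes wt a :: "nat \<Rightarrow> real"
  assumes "finite J" "(\<Sum>j\<in>J. wt j) = 1"
  shows "(\<Sum>j\<in>J. wt j * (x - a j)\<^sup>2) = (x - (\<Sum>j\<in>J. wt j * a j))\<^sup>2 + (\<Sum>j\<in>J. wt j * ((\<Sum>j\<in>J. wt j * a j) - a j)\<^sup>2)"
proof -
  define c where "c = (\<Sum>j\<in>J. wt j * a j)"
  have "(\<Sum>j\<in>J. wt j * (x - a j)\<^sup>2) - (\<Sum>j\<in>J. wt j * (c - a j)\<^sup>2)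
      = (\<Sum>j\<in>J. (x\<^sup>2 - c\<^sup>2) * wt j - 2 * (x - c) * (wt j * a j))"
    by (simp add: sum_subtractf[symmetric] power2_eq_square algebra_simps)
  also have "\<dots> = (x\<^sup>2 - c\<^sup>2) * (\<Sum>j\<in>J. wt j) - 2 * (x - c) * c"
    by (simp add: sum_subtractf sum_distrib_left[symmetric] c_def)
  also have "\<dots> = (x - c)\<^sup>2" using assms(2) by (simp add: power2_eq_square algebra_simps)
  finally show ?thesis by (simp add: c_def[symmetric])
qed

lemma bary:
  fixes J :: "nat set" and wt p \<sigma> :: "nat \<Rightarrow> real"
  assumes fin: "finite J" and wpos: "\<And>j. j \<in> J \<Longrightarrow> wt j \<ge> 0" and wsum: "(\<Sum>j\<in>J. wt j) = 1"
    and j0: "j0 \<in> J" "wt j0 > 0" and spos: "\<And>j. j \<in> J \<Longrightarrow> \<sigma> j > 0"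
  shows "is_argmin_U2 (\<lambda>\<eta>. \<Sum>j\<in>J. wt j * (W2 \<eta> (gaussian (p j) ((\<sigma> j)\<^sup>2)))\<^sup>2)
            (gaussian (\<Sum>j\<in>J. wt j * p j) ((\<Sum>j\<in>J. wt j * \<sigma> j)\<^sup>2))"
    and "\<And>\<eta>. is_argmin_U2 (\<lambda>\<eta>. \<Sum>j\<in>J. wt j * (W2 \<eta> (gaussian (p j) ((\<sigma> j)\<^sup>2)))\<^sup>2) \<eta>
            \<Longrightarrow> \<eta> = gaussian (\<Sum>j\<in>J. wt j * p j) ((\<Sum>j\<in>J. wt j * \<sigma> j)\<^sup>2)"
proof -
  define F where "F = (\<lambda>\<eta>. \<Sum>j\<in>J. wt j * (W2 \<eta> (gaussian (p j) ((\<sigma> j)\<^sup>2)))\<^sup>2)"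
  define ms where "ms = (\<Sum>j\<in>J. wt j * p j)"
  define ss where "ss = (\<Sum>j\<in>J. wt j * \<sigma> j)"
  define LB where "LB = (\<lambda>x y j. (x - p j)\<^sup>2 + (y - \<sigma> j)\<^sup>2)"
  have ss: "ss > 0"
  proof -
    have "wt j0 * \<sigma> j0 \<le> ss" unfolding ss_def
      by (rule member_le_sum[OF j0(1) _ fin]) (use wpos spos in \<open>auto intro: mult_nonneg_nonneg less_imp_le\<close>)
    moreover have "wt j0 * \<sigma> j0 > 0" using j0 spos by simp
    ultimately show ?thesis by simp
  qed
  have FG: "F (gaussian ms (ss\<^sup>2)) = (\<Sum>j\<in>J. wt j * LB ms ss j)"
    unfolding F_def LB_def by (intro sum.cong refl) (simp add: W2_gauss ss spos)
  have LBsum: "(\<Sum>j\<in>J. wt j * LB x y j) = (x - ms)\<^sup>2 + (y - ss)\<^sup>2 + (\<Sum>j\<in>J. wt j * LB ms ss j)" for x y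
  proof -
    have "(\<Sum>j\<in>J. wt j * LB x y j) = (\<Sum>j\<in>J. wt j * (x - p j)\<^sup>2) + (\<Sum>j\<in>J. wt j * (y - \<sigma> j)\<^sup>2)"
      unfolding LB_def by (simp add: sum.distrib distrib_left)
    also have "\<dots> = ((x - ms)\<^sup>2 + (\<Sum>j\<in>J. wt j * (ms - p j)\<^sup>2)) + ((y - ss)\<^sup>2 + (\<Sum>j\<in>J. wt j * (ss - \<sigma> j)\<^sup>2))"
      unfolding ms_def ss_def using quad_sum[OF fin wsum, of x p] quad_sum[OF fin wsum, of y \<sigma>] by linarith
    also have "\<dots> = (x - ms)\<^sup>2 + (y - ss)\<^sup>2 + (\<Sum>j\<in>J. wt j * LB ms ss j)"
      unfolding LB_def by (simp add: sum.distrib distrib_left)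
    finally show ?thesis .
  qed
  have Flow: "F \<eta> \<ge> (\<Sum>j\<in>J. wt j * LB (mean \<eta>) (sqrt (vr \<eta>)) j)" if U: "U2 \<eta>" for \<eta>
    unfolding F_def LB_def
  proof (rule sum_mono)
    fix j assume j: "j \<in> J"
    show "wt j * ((mean \<eta> - p j)\<^sup>2 + (sqrt (vr \<eta>) - \<sigma> j)\<^sup>2) \<le> wt j * (W2 \<eta> (gaussian (p j) ((\<sigma> j)\<^sup>2)))\<^sup>2"
      using W2_lower[OF U U2_gaussian[OF spos[OF j]]] spos[OF j] wpos[OF j]
      by (intro mult_left_mono) (simp_all add: gauss_mean gauss_sd)
  qed
  have UG: "U2 (gaussian ms (ss\<^sup>2))" by (rule U2_gaussian[OF ss])
  have amin: "is_argmin_U2 F (gaussian ms (ss\<^sup>2))"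
    unfolding is_argmin_U2_def
  proof (intro conjI allI impI UG)
    fix \<xi> assume U: "U2 \<xi>"
    have "F (gaussian ms (ss\<^sup>2)) \<le> (mean \<xi> - ms)\<^sup>2 + (sqrt (vr \<xi>) - ss)\<^sup>2 + (\<Sum>j\<in>J. wt j * LB ms ss j)"
      unfolding FG by simp
    also have "\<dots> \<le> F \<xi>" using Flow[OF U] LBsum[of "mean \<xi>" "sqrt (vr \<xi>)"] by linarith
    finally show "F (gaussian ms (ss\<^sup>2)) \<le> F \<xi>" .
  qed
  then show "is_argmin_U2 (\<lambda>\<eta>. \<Sum>j\<in>J. wt j * (W2 \<eta> (gaussian (p j) ((\<sigma> j)\<^sup>2)))\<^sup>2)
            (gaussian (\<Sum>j\<in>J. wt j * p j) ((\<Sum>j\<in>J. wt j * \<sigma> j)\<^sup>2))"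
    by (simp add: F_def ms_def ss_def)
  fix \<eta> assume "is_argmin_U2 (\<lambda>\<eta>. \<Sum>j\<in>J. wt j * (W2 \<eta> (gaussian (p j) ((\<sigma> j)\<^sup>2)))\<^sup>2) \<eta>"
  then have am: "is_argmin_U2 F \<eta>" by (simp add: F_def)
  then have U: "U2 \<eta>" and le: "F \<eta> \<le> F (gaussian ms (ss\<^sup>2))" using UG by (auto simp: is_argmin_U2_def)
  define m where "m = mean \<eta>"
  define s where "s = sqrt (vr \<eta>)"
  have "(m - ms)\<^sup>2 + (s - ss)\<^sup>2 + (\<Sum>j\<in>J. wt j * LB ms ss j) \<le> F \<eta>"
    using Flow[OF U] LBsum[of m s] unfolding m_def s_def by linarith
  also have "\<dots> \<le> (\<Sum>j\<in>J. wt j * LB ms ss j)" using le FG by simp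
  finally have "(m - ms)\<^sup>2 + (s - ss)\<^sup>2 \<le> 0" by simp
  moreover have "(m - ms)\<^sup>2 \<ge> 0" "(s - ss)\<^sup>2 \<ge> 0" by simp_all
  ultimately have "(m - ms)\<^sup>2 = 0" "(s - ss)\<^sup>2 = 0" by linarith+
  then have mm: "m = ms" and sss: "s = ss" by simp_all
  have "(\<Sum>j\<in>J. wt j * ((W2 \<eta> (gaussian (p j) ((\<sigma> j)\<^sup>2)))\<^sup>2 - LB ms ss j)) = F \<eta> - (\<Sum>j\<in>J. wt j * LB ms ss j)"
    unfolding F_def by (simp add: sum_subtractf algebra_simps)
  also have "\<dots> \<le> 0" using le FG by simp
  finally have sle: "(\<Sum>j\<in>J. wt j * ((W2 \<eta> (gaussian (p j) ((\<sigma> j)\<^sup>2)))\<^sup>2 - LB ms ss j)) \<le> 0" .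
  have nn: "\<And>j. j \<in> J \<Longrightarrow> 0 \<le> wt j * ((W2 \<eta> (gaussian (p j) ((\<sigma> j)\<^sup>2)))\<^sup>2 - LB ms ss j)"
  proof -
    fix j assume j: "j \<in> J"
    have "LB ms ss j \<le> (W2 \<eta> (gaussian (p j) ((\<sigma> j)\<^sup>2)))\<^sup>2"
      using W2_lower[OF U U2_gaussian[OF spos[OF j]]] spos[OF j] mm sss
      by (simp add: LB_def gauss_mean gauss_sd m_def s_def)
    then show "0 \<le> wt j * ((W2 \<eta> (gaussian (p j) ((\<sigma> j)\<^sup>2)))\<^sup>2 - LB ms ss j)"
      using wpos[OF j] by simp
  qed
  have "(\<Sum>j\<in>J. wt j * ((W2 \<eta> (gaussian (p j) ((\<sigma> j)\<^sup>2)))\<^sup>2 - LB ms ss j)) = 0"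
  proof -
    have "0 \<le> (\<Sum>j\<in>J. wt j * ((W2 \<eta> (gaussian (p j) ((\<sigma> j)\<^sup>2)))\<^sup>2 - LB ms ss j))"
      by (rule sum_nonneg) (rule nn)
    then show ?thesis using sle by linarith
  qed
  then have "wt j0 * ((W2 \<eta> (gaussian (p j0) ((\<sigma> j0)\<^sup>2)))\<^sup>2 - LB ms ss j0) = 0"
    using sum_nonneg_eq_0_iff[OF fin, of "\<lambda>j. wt j * ((W2 \<eta> (gaussian (p j) ((\<sigma> j)\<^sup>2)))\<^sup>2 - LB ms ss j)"] nn j0(1)
    by blast
  then have W: "(W2 \<eta> (gaussian (p j0) ((\<sigma> j0)\<^sup>2)))\<^sup>2 \<le> (mean \<eta> - p j0)\<^sup>2 + (sqrt (vr \<eta>) - \<sigma> j0)\<^sup>2"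
    using j0(2) mm sss by (simp add: LB_def m_def s_def)
  have vpos: "vr \<eta> > 0" using sss ss unfolding s_def by (metis real_sqrt_gt_zero real_sqrt_le_0_iff not_le)
  have "\<eta> = gaussian (mean \<eta>) ((sqrt (vr \<eta>))\<^sup>2)"
    by (rule gauss_unique[OF U spos[OF j0(1)] vpos W])
  then show "\<eta> = gaussian (\<Sum>j\<in>J. wt j * p j) ((\<Sum>j\<in>J. wt j * \<sigma> j)\<^sup>2)"
    using mm sss by (simp add: m_def s_def ms_def ss_def)
qed

fun citer :: "(nat \<Rightarrow> nat \<Rightarrow> real) \<Rightarrow> (nat \<times> nat) set \<Rightarrow> (nat \<Rightarrow> real) \<Rightarrow> nat \<Rightarrow> nat \<Rightarrow> real" where
  "citer w E xz 0 i = xz i"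
| "citer w E xz (Suc t) i = (\<Sum>j\<in>nbhd E i. w i j * citer w E xz t j)"

declare citer.simps(2)[simp del]

locale cons =
  fixes n :: nat and E :: "(nat \<times> nat) set" and w :: "nat \<Rightarrow> nat \<Rightarrow> real" and xz :: "nat \<Rightarrow> real"
  assumes graph: "connected_undirected_graph n E"
    and weights: "adapted_doubly_stochastic n E w"
begin

abbreviation x where "x t i \<equiv> citer w E xz t i"

lemma n1: "n \<ge> 1" using graph by (simp add: connected_undirected_graph_def)
lemma Esub: "E \<subseteq> {..<n} \<times> {..<n}" using graph by (simp add: connected_undirected_graph_def)
lemma Estar: "i < n \<Longrightarrow> j < n \<Longrightarrow> (i, j) \<in> E\<^sup>*" using graph by (simp add: connected_undirected_graph_def)
lemma nb_sub: "nbhd E i \<subseteq> {..<n}" using Esub by (auto simp: nbhd_def)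

lemma wpos_iff: "i < n \<Longrightarrow> j < n \<Longrightarrow> w i j > 0 \<longleftrightarrow> (i, j) \<in> E"
  using weights by (simp add: adapted_doubly_stochastic_def)
lemma wzero: "i < n \<Longrightarrow> j < n \<Longrightarrow> (i, j) \<notin> E \<Longrightarrow> w i j = 0"
  using weights by (simp add: adapted_doubly_stochastic_def)
lemma wnn: "i < n \<Longrightarrow> j < n \<Longrightarrow> w i j \<ge> 0"
  using wpos_iff wzero by (cases "(i, j) \<in> E") (auto intro: less_imp_le)
lemma wii: "i < n \<Longrightarrow> w i i > 0"
  using weights unfolding adapted_doubly_stochastic_def by blast
lemma rowsum: "i < n \<Longrightarrow> (\<Sum>j<n. w i j) = 1"
  using weights by (simp add: adapted_doubly_stochastic_def)
lemma colsum: "j < n \<Longrightarrow> (\<Sum>i<n. w i j) = 1"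
  using weights by (simp add: adapted_doubly_stochastic_def)

lemma sum_nbhd: "i < n \<Longrightarrow> (\<Sum>j\<in>nbhd E i. w i j * f j) = (\<Sum>j<n. w i j * f j)"
  by (rule sum.mono_neutral_left) (use nb_sub wzero in \<open>auto simp: nbhd_def\<close>)

lemma rec: "i < n \<Longrightarrow> x (Suc t) i = (\<Sum>j<n. w i j * x t j)"
  by (simp add: sum_nbhd citer.simps(2))

definition mn where "mn t = Min ((\<lambda>j. x t j) ` {..<n})"
definition mx where "mx t = Max ((\<lambda>j. x t j) ` {..<n})"

lemma ne: "{..<n} \<noteq> {}"
proof -
  have "0 \<in> {..<n}" using n1 by simp
  then show ?thesis by blast
qed

lemma mn_le: "i < n \<Longrightarrow> mn t \<le> x t i" unfolding mn_def by (rule Min_le) auto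
lemma mx_ge: "i < n \<Longrightarrow> x t i \<le> mx t" unfolding mx_def by (rule Max_ge) auto
lemma mn_in: "\<exists>i<n. x t i = mn t"
proof -
  have "mn t \<in> (\<lambda>j. x t j) ` {..<n}" unfolding mn_def by (rule Min_in) (use ne in auto)
  then show ?thesis by force
qed
lemma mx_in: "\<exists>i<n. x t i = mx t"
proof -
  have "mx t \<in> (\<lambda>j. x t j) ` {..<n}" unfolding mx_def by (rule Max_in) (use ne in auto)
  then show ?thesis by force
qed

lemma conv_lo: assumes "i < n" shows "mn t \<le> x (Suc t) i"
proof -
  have "mn t = (\<Sum>j<n. w i j * mn t)" using rowsum[OF assms] by (simp add: sum_distrib_right[symmetric])
  also have "\<dots> \<le> (\<Sum>j<n. w i j * x t j)"
    by (rule sum_mono) (use assms wnn mn_le in \<open>auto intro: mult_left_mono\<close>)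
  finally show ?thesis using rec[OF assms] by simp
qed

lemma conv_hi: assumes "i < n" shows "x (Suc t) i \<le> mx t"
proof -
  have "(\<Sum>j<n. w i j * x t j) \<le> (\<Sum>j<n. w i j * mx t)"
    by (rule sum_mono) (use assms wnn mx_ge in \<open>auto intro: mult_left_mono\<close>)
  also have "\<dots> = mx t" using rowsum[OF assms] by (simp add: sum_distrib_right[symmetric])
  finally show ?thesis using rec[OF assms] by simp
qed

lemma mn_Suc: "mn t \<le> mn (Suc t)"
proof -
  obtain i where "i < n" "x (Suc t) i = mn (Suc t)" using mn_in by blast
  then show ?thesis using conv_lo[of i t] by simp
qed
lemma mx_Suc: "mx (Suc t) \<le> mx t"
proof -
  obtain i where "i < n" "x (Suc t) i = mx (Suc t)" using mx_in by blast
  then show ?thesis using conv_hi[of i t] by simp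
qed

lemma mn_mono: "t \<le> t' \<Longrightarrow> mn t \<le> mn t'"
  by (rule lift_Suc_mono_le[of mn]) (use mn_Suc in auto)
lemma mx_mono: "t \<le> t' \<Longrightarrow> mx t' \<le> mx t"
  by (rule lift_Suc_antimono_le[of mx]) (use mx_Suc in auto)

lemma below: "i < n \<Longrightarrow> mn t \<le> x (t + k) i"
  using mn_mono[of t "t + k"] mn_le[of i "t + k"] by simp

definition P where "P k i j \<delta> \<longleftrightarrow> (\<forall>t. \<delta> * (x t j - mn t) \<le> x (t + k) i - mn t)"

lemma P_step:
  assumes i: "i < n" and l: "l < n" and Pl: "P k l j \<delta>" and d: "\<delta> \<ge> 0" and j: "j < n"
  shows "P (Suc k) i j (w i l * \<delta>)"
  unfolding P_def
proof
  fix t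
  have "x (t + Suc k) i - mn t = (\<Sum>l'<n. w i l' * (x (t + k) l' - mn t))"
    using rec[OF i, of "t + k"] rowsum[OF i]
    by (simp add: sum_subtractf right_diff_distrib sum_distrib_right[symmetric])
  also have "\<dots> \<ge> w i l * (x (t + k) l - mn t)"
    by (rule member_le_sum[where f = "\<lambda>l'. w i l' * (x (t + k) l' - mn t)"])
       (use l wnn[OF i] below in \<open>auto intro: mult_nonneg_nonneg\<close>)
  moreover have "w i l * (\<delta> * (x t j - mn t)) \<le> w i l * (x (t + k) l - mn t)"
    using Pl wnn[OF i l] unfolding P_def by (intro mult_left_mono) auto
  ultimately show "w i l * \<delta> * (x t j - mn t) \<le> x (t + Suc k) i - mn t"
    by (simp add: mult.assoc)
qed

lemma P_mono: "P k i j \<delta> \<Longrightarrow> 0 \<le> \<delta>' \<Longrightarrow> \<delta>' \<le> \<delta> \<Longrightarrow> j < n \<Longrightarrow> P k i j \<delta>'"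
  unfolding P_def
proof
  fix t assume "\<forall>t. \<delta> * (x t j - mn t) \<le> x (t + k) i - mn t" "0 \<le> \<delta>'" "\<delta>' \<le> \<delta>" "j < n"
  moreover have "0 \<le> x t j - mn t" using mn_le[OF \<open>j < n\<close>] by simp
  ultimately show "\<delta>' * (x t j - mn t) \<le> x (t + k) i - mn t"
    by (meson mult_right_mono order_trans)
qed

lemma reach:
  assumes "(i, j) \<in> E\<^sup>*" "j < n"
  shows "i < n \<longrightarrow> (\<exists>k \<delta>. \<delta> > 0 \<and> P k i j \<delta>)"
  using assms(1)
proof (induction rule: converse_rtrancl_induct)
  case base
  show ?case unfolding P_def by (intro impI exI[of _ 0] exI[of _ 1]) simp
next
  case (step y z)
  show ?case
  proof
    assume y: "y < n"
    have z: "z < n" using step.hyps(1) Esub by auto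
    obtain k \<delta> where d: "\<delta> > 0" and Pz: "P k z j \<delta>" using step.IH z by blast
    have "P (Suc k) y j (w y z * \<delta>)" by (rule P_step[OF y z Pz]) (use d assms(2) in auto)
    moreover have "w y z * \<delta> > 0" using wpos_iff[OF y z] step.hyps(1) d by simp
    ultimately show "\<exists>k \<delta>. \<delta> > 0 \<and> P k y j \<delta>" by blast
  qed
qed

lemma extend:
  assumes "P k i j \<delta>" "\<delta> > 0" "i < n" "j < n"
  shows "P (k + l) i j (w i i ^ l * \<delta>)"
proof (induction l)
  case 0 then show ?case using assms by simp
next
  case (Suc l)
  have "P (Suc (k + l)) i j (w i i * (w i i ^ l * \<delta>))"
    by (rule P_step[OF assms(3) assms(3) Suc]) (use assms wii[OF assms(3)] in auto)
  then show ?case by (simp add: mult.assoc)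
qed

lemma uniform: "\<exists>K \<delta>. K \<ge> 1 \<and> 0 < \<delta> \<and> \<delta> < 1 \<and> (\<forall>i<n. \<forall>j<n. P K i j \<delta>)"
proof -
  define S where "S = {..<n} \<times> {..<n}"
  have fS: "finite S" and neS: "S \<noteq> {}" using ne by (auto simp: S_def)
  have "\<forall>q\<in>S. \<exists>kd. snd kd > 0 \<and> P (fst kd) (fst q) (snd q) (snd kd)"
    using reach Estar by (fastforce simp: S_def)
  then obtain g where g: "\<And>q. q \<in> S \<Longrightarrow> snd (g q) > 0 \<and> P (fst (g q)) (fst q) (snd q) (snd (g q))"
    by metis
  define K where "K = Max ((fst \<circ> g) ` S) + 1"
  have Kge: "fst (g q) \<le> K" if "q \<in> S" for q
    using that fS unfolding K_def by (simp add: le_SucI)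
  have "\<forall>q\<in>S. \<exists>d. d > 0 \<and> P K (fst q) (snd q) d"
  proof
    fix q assume q: "q \<in> S"
    then have qn: "fst q < n" "snd q < n" by (auto simp: S_def)
    have "P (fst (g q) + (K - fst (g q))) (fst q) (snd q) (w (fst q) (fst q) ^ (K - fst (g q)) * snd (g q))"
      by (rule extend) (use g[OF q] qn in auto)
    moreover have "w (fst q) (fst q) ^ (K - fst (g q)) * snd (g q) > 0"
      using g[OF q] wii[OF qn(1)] by simp
    ultimately show "\<exists>d. d > 0 \<and> P K (fst q) (snd q) d" using Kge[OF q] by auto
  qed
  then obtain h where h: "\<And>q. q \<in> S \<Longrightarrow> h q > 0 \<and> P K (fst q) (snd q) (h q)" by metis
  define \<delta> where "\<delta> = min (1/2) (Min (h ` S))"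
  have Mp: "Min (h ` S) > 0" using fS neS h by (subst Min_gr_iff) auto
  have dpos: "\<delta> > 0" using Mp by (simp add: \<delta>_def)
  have "\<forall>i<n. \<forall>j<n. P K i j \<delta>"
  proof (intro allI impI)
    fix i j assume "i < n" "j < n"
    then have q: "(i, j) \<in> S" by (simp add: S_def)
    have "\<delta> \<le> h (i, j)" unfolding \<delta>_def using fS q by (simp add: min.coboundedI2)
    then show "P K i j \<delta>" using h[OF q] dpos P_mono \<open>j < n\<close> by auto
  qed
  then show ?thesis using dpos by (intro exI[of _ K] exI[of _ \<delta>]) (auto simp: K_def \<delta>_def)
qed

definition Dg where "Dg t = mx t - mn t"

lemma Dg_nn: "Dg t \<ge> 0"
  using mn_le[of 0 t] mx_ge[of 0 t] n1 by (simp add: Dg_def)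

lemma Dg_mono: "t \<le> t' \<Longrightarrow> Dg t' \<le> Dg t"
  using mn_mono mx_mono by (simp add: Dg_def) (meson add_mono diff_mono)

lemma contract:
  assumes PK: "\<forall>i<n. \<forall>j<n. P K i j \<delta>"
  shows "Dg (t + K) \<le> (1 - \<delta>) * Dg t"
proof -
  obtain j where j: "j < n" "x t j = mx t" using mx_in by blast
  obtain i where i: "i < n" "x (t + K) i = mn (t + K)" using mn_in by blast
  have "\<delta> * (mx t - mn t) \<le> mn (t + K) - mn t" using PK i j unfolding P_def by metis
  moreover have "mx (t + K) \<le> mx t" by (rule mx_mono) simp
  ultimately show ?thesis by (simp add: Dg_def algebra_simps)
qed

lemma sum_pres: "(\<Sum>i<n. x t i) = (\<Sum>i<n. xz i)"
proof (induction t)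
  case 0 then show ?case by simp
next
  case (Suc t)
  have "(\<Sum>i<n. x (Suc t) i) = (\<Sum>i<n. \<Sum>j<n. w i j * x t j)" by (simp add: rec)
  also have "\<dots> = (\<Sum>j<n. \<Sum>i<n. w i j * x t j)" by (rule sum.swap)
  also have "\<dots> = (\<Sum>j<n. x t j)" by (simp add: sum_distrib_right[symmetric] colsum)
  finally show ?case using Suc by simp
qed

lemma avg_bound:
  assumes i: "i < n"
  shows "\<bar>x t i - (1 / real n) * (\<Sum>j<n. xz j)\<bar> \<le> Dg t"
proof -
  define a where "a = (1 / real n) * (\<Sum>j<n. xz j)"
  have npos: "real n > 0" using n1 by simp
  have "real n * mn t = (\<Sum>j<n. mn t)" by simp
  also have "\<dots> \<le> (\<Sum>j<n. x t j)" by (rule sum_mono) (simp add: mn_le)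
  finally have lo: "real n * mn t \<le> (\<Sum>j<n. xz j)" by (simp add: sum_pres)
  have "(\<Sum>j<n. x t j) \<le> (\<Sum>j<n. mx t)" by (rule sum_mono) (simp add: mx_ge)
  also have "\<dots> = real n * mx t" by simp
  finally have hi: "(\<Sum>j<n. xz j) \<le> real n * mx t" by (simp add: sum_pres)
  have "mn t \<le> a" "a \<le> mx t" using lo hi npos unfolding a_def by (simp_all add: field_simps)
  moreover have "mn t \<le> x t i" "x t i \<le> mx t" using mn_le[OF i] mx_ge[OF i] by auto
  ultimately show ?thesis unfolding a_def[symmetric] Dg_def by (simp add: abs_le_iff)
qed

lemma consensus:
  "\<exists>C \<rho>. C > 0 \<and> 0 < \<rho> \<and> \<rho> < 1 \<and> (\<forall>t. \<forall>i<n. \<bar>x t i - (1 / real n) * (\<Sum>j<n. xz j)\<bar> \<le> C * \<rho> ^ t)"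
proof -
  obtain K \<delta> where K: "K \<ge> 1" and d: "0 < \<delta>" "\<delta> < 1" and PK: "\<forall>i<n. \<forall>j<n. P K i j \<delta>"
    using uniform by blast
  have geo: "Dg (K * q) \<le> (1 - \<delta>) ^ q * Dg 0" for q
  proof (induction q)
    case 0 then show ?case by simp
  next
    case (Suc q)
    have "Dg (K * Suc q) = Dg (K * q + K)" by (simp add: algebra_simps)
    also have "\<dots> \<le> (1 - \<delta>) * Dg (K * q)" by (rule contract[OF PK])
    also have "\<dots> \<le> (1 - \<delta>) * ((1 - \<delta>) ^ q * Dg 0)" using Suc d by (intro mult_left_mono) auto
    finally show ?case by simp
  qed
  define \<rho> where "\<rho> = root K (1 - \<delta>)"
  have Kp: "K > 0" using K by simp
  have rp: "\<rho> > 0" using d Kp by (simp add: \<rho>_def)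
  have r1: "\<rho> < 1" using d Kp by (simp add: \<rho>_def)
  have rK: "\<rho> ^ K = 1 - \<delta>" using d Kp by (simp add: \<rho>_def real_root_pow_pos2)
  define C where "C = Dg 0 / (1 - \<delta>) + 1"
  have Cp: "C > 0"
  proof -
    have "Dg 0 / (1 - \<delta>) \<ge> 0" using Dg_nn[of 0] d by simp
    then show ?thesis by (simp add: C_def)
  qed
  have "\<forall>t. \<forall>i<n. \<bar>x t i - (1 / real n) * (\<Sum>j<n. xz j)\<bar> \<le> C * \<rho> ^ t"
  proof (intro allI impI)
    fix t i assume i: "i < n"
    define q where "q = t div K"
    have t: "t = K * q + t mod K" by (simp add: q_def)
    have "\<bar>x t i - (1 / real n) * (\<Sum>j<n. xz j)\<bar> \<le> Dg t" by (rule avg_bound[OF i])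
    also have "\<dots> \<le> Dg (K * q)" by (rule Dg_mono) (simp add: q_def)
    also have "\<dots> \<le> (1 - \<delta>) ^ q * Dg 0" by (rule geo)
    also have "(1 - \<delta>) ^ q = \<rho> ^ (K * q)" by (simp add: power_mult rK)
    also have "\<rho> ^ (K * q) * (1 - \<delta>) \<le> \<rho> ^ t"
    proof -
      have "\<rho> ^ K \<le> \<rho> ^ (t mod K)"
        using rp r1 Kp by (intro power_decreasing) (simp_all add: less_imp_le)
      then have "\<rho> ^ (K * q) * \<rho> ^ K \<le> \<rho> ^ (K * q) * \<rho> ^ (t mod K)"
        using rp by (intro mult_left_mono) simp_all
      also have "\<dots> = \<rho> ^ t" by (subst (2) t) (simp add: power_add)
      finally show ?thesis by (simp add: rK)
    qed
    then have "\<rho> ^ (K * q) \<le> \<rho> ^ t / (1 - \<delta>)" using d by (simp add: field_simps)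
    then have "\<rho> ^ (K * q) * Dg 0 \<le> \<rho> ^ t / (1 - \<delta>) * Dg 0"
      using Dg_nn by (intro mult_right_mono) simp_all
    also have "\<dots> \<le> C * \<rho> ^ t"
    proof -
      have "C * \<rho> ^ t = \<rho> ^ t / (1 - \<delta>) * Dg 0 + \<rho> ^ t" unfolding C_def by (simp add: algebra_simps)
      moreover have "\<rho> ^ t \<ge> 0" using rp by simp
      ultimately show ?thesis by linarith
    qed
    finally show "\<bar>x t i - (1 / real n) * (\<Sum>j<n. xz j)\<bar> \<le> C * \<rho> ^ t" .
  qed
  then show ?thesis using Cp rp r1 by blast
qed

end

lemma cons_inst: "connected_undirected_graph n E \<Longrightarrow> adapted_doubly_stochastic n E w \<Longrightarrow> cons n E w"
  by (rule cons.intro)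

lemma sqrt_sum_sq_le: "sqrt (a\<^sup>2 + b\<^sup>2) \<le> \<bar>a\<bar> + \<bar>b::real\<bar>"
proof -
  have "a\<^sup>2 + b\<^sup>2 \<le> (\<bar>a\<bar> + \<bar>b\<bar>)\<^sup>2" by (simp add: power2_eq_square algebra_simps)
  then have "sqrt (a\<^sup>2 + b\<^sup>2) \<le> sqrt ((\<bar>a\<bar> + \<bar>b\<bar>)\<^sup>2)" by (rule real_sqrt_le_mono)
  then show ?thesis by simp
qed

lemma W2_nn: "W2 \<eta> \<nu> \<ge> 0" unfolding W2_def by simp

theorem proposition2:
  fixes n :: nat and E :: "(nat \<times> nat) set" and w :: "nat \<Rightarrow> nat \<Rightarrow> real"
    and \<mu> :: "nat \<Rightarrow> nat \<Rightarrow> real measure"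
    and p0 P0 :: "nat \<Rightarrow> real"
  assumes graph: "connected_undirected_graph n E"
    and weights: "adapted_doubly_stochastic n E w"
    and init_pos: "\<forall>i<n. P0 i > 0"
    and init: "\<forall>i<n. \<mu> i 0 = gaussian (p0 i) (P0 i)"
    and update: "\<forall>t. \<forall>i<n. is_argmin_U2
                   (\<lambda>\<eta>. \<Sum>j\<in>nbhd E i. w i j * (W2 \<eta> (\<mu> j t))\<^sup>2) (\<mu> i (Suc t))"
  shows "(\<exists>p P :: nat \<Rightarrow> nat \<Rightarrow> real.
            (\<forall>i<n. p i 0 = p0 i \<and> P i 0 = P0 i)
          \<and> (\<forall>t. \<forall>i<n. p i (Suc t) = (\<Sum>j\<in>nbhd E i. w i j * p j t)
                     \<and> sqrt (P i (Suc t)) = (\<Sum>j\<in>nbhd E i. w i j * sqrt (P j t)))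
          \<and> (\<forall>t. \<forall>i<n. P i t > 0 \<and> \<mu> i t = gaussian (p i t) (P i t)))
      \<and> (\<exists>\<mu>s. is_argmin_U2 (\<lambda>\<eta>. (1 / real n) * (\<Sum>j<n. (W2 \<eta> (\<mu> j 0))\<^sup>2)) \<mu>s)
      \<and> (\<forall>\<mu>s. is_argmin_U2 (\<lambda>\<eta>. (1 / real n) * (\<Sum>j<n. (W2 \<eta> (\<mu> j 0))\<^sup>2)) \<mu>s \<longrightarrow>
           (\<forall>i<n. \<exists>C \<rho>. C > 0 \<and> 0 < \<rho> \<and> \<rho> < 1 \<and> (\<forall>t. W2 (\<mu> i t) \<mu>s \<le> C * \<rho> ^ t)))"
proof -
  have C: "cons n E w" using graph weights by (rule cons_inst)
  interpret C0: cons n E w by (rule C)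
  define s0 where "s0 = (\<lambda>i. sqrt (P0 i))"
  define p where "p = (\<lambda>i t. citer w E p0 t i)"
  define sg where "sg = (\<lambda>i t. citer w E s0 t i)"
  define P where "P = (\<lambda>i t. (sg i t)\<^sup>2)"
  have nbn: "\<And>i j. j \<in> nbhd E i \<Longrightarrow> j < n" using C0.nb_sub by auto
  have finnb: "\<And>i. finite (nbhd E i)" using C0.nb_sub finite_subset by blast
  have inb: "\<And>i. i < n \<Longrightarrow> i \<in> nbhd E i"
    using graph by (simp add: connected_undirected_graph_def nbhd_def)
  have wsum_nb: "\<And>i. i < n \<Longrightarrow> (\<Sum>j\<in>nbhd E i. w i j) = 1"
    using C0.sum_nbhd[where f = "\<lambda>_. 1"] C0.rowsum by simp
  have sgpos: "\<forall>i<n. sg i t > 0" for t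
  proof (induction t)
    case 0 then show ?case using init_pos by (simp add: sg_def s0_def)
  next
    case (Suc t)
    show ?case
    proof (intro allI impI)
      fix i assume i: "i < n"
      have nnj: "\<And>j. j \<in> nbhd E i \<Longrightarrow> 0 \<le> w i j * sg j t"
      proof -
        fix j assume "j \<in> nbhd E i"
        then have j: "j < n" by (rule nbn)
        show "0 \<le> w i j * sg j t" using C0.wnn[OF i j] Suc j by (simp add: less_imp_le)
      qed
      have "w i i * sg i t \<le> (\<Sum>j\<in>nbhd E i. w i j * sg j t)"
        by (rule member_le_sum[where f = "\<lambda>j. w i j * sg j t", OF inb[OF i] nnj finnb]) simp
      moreover have "w i i * sg i t > 0" using C0.wii[OF i] Suc i by simp
      ultimately show "sg i (Suc t) > 0" by (simp add: sg_def citer.simps(2))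
    qed
  qed
  have gauss: "\<forall>i<n. \<mu> i t = gaussian (p i t) ((sg i t)\<^sup>2)" for t
  proof (induction t)
    case 0 then show ?case using init init_pos by (simp add: p_def sg_def s0_def less_imp_le)
  next
    case (Suc t)
    show ?case
    proof (intro allI impI)
      fix i assume i: "i < n"
      have am: "is_argmin_U2 (\<lambda>\<eta>. \<Sum>j\<in>nbhd E i. w i j * (W2 \<eta> (\<mu> j t))\<^sup>2) (\<mu> i (Suc t))"
        using update i by blast
      have "(\<lambda>\<eta>. \<Sum>j\<in>nbhd E i. w i j * (W2 \<eta> (\<mu> j t))\<^sup>2)
          = (\<lambda>\<eta>. \<Sum>j\<in>nbhd E i. w i j * (W2 \<eta> (gaussian (p j t) ((sg j t)\<^sup>2)))\<^sup>2)"
        using Suc nbn by (intro ext sum.cong refl) simp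
      with am have am': "is_argmin_U2 (\<lambda>\<eta>. \<Sum>j\<in>nbhd E i. w i j * (W2 \<eta> (gaussian (p j t) ((sg j t)\<^sup>2)))\<^sup>2) (\<mu> i (Suc t))"
        by simp
      have "\<mu> i (Suc t) = gaussian (\<Sum>j\<in>nbhd E i. w i j * p j t) ((\<Sum>j\<in>nbhd E i. w i j * sg j t)\<^sup>2)"
        by (rule bary(2)[OF finnb _ wsum_nb[OF i] inb[OF i] C0.wii[OF i] _ am'])
           (use nbn C0.wnn[OF i] sgpos in auto)
      then show "\<mu> i (Suc t) = gaussian (p i (Suc t)) ((sg i (Suc t))\<^sup>2)"
        by (simp add: p_def sg_def citer.simps(2))
    qed
  qed
  have part1: "\<exists>p P :: nat \<Rightarrow> nat \<Rightarrow> real.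
            (\<forall>i<n. p i 0 = p0 i \<and> P i 0 = P0 i)
          \<and> (\<forall>t. \<forall>i<n. p i (Suc t) = (\<Sum>j\<in>nbhd E i. w i j * p j t)
                     \<and> sqrt (P i (Suc t)) = (\<Sum>j\<in>nbhd E i. w i j * sqrt (P j t)))
          \<and> (\<forall>t. \<forall>i<n. P i t > 0 \<and> \<mu> i t = gaussian (p i t) (P i t))"
  proof -
    have c1: "\<forall>i<n. p i 0 = p0 i \<and> P i 0 = P0 i"
      using init_pos by (simp add: p_def P_def sg_def s0_def less_imp_le)
    have c2: "\<forall>t. \<forall>i<n. p i (Suc t) = (\<Sum>j\<in>nbhd E i. w i j * p j t)
                     \<and> sqrt (P i (Suc t)) = (\<Sum>j\<in>nbhd E i. w i j * sqrt (P j t))"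
    proof (intro allI impI conjI)
      fix t i assume i: "i < n"
      show "p i (Suc t) = (\<Sum>j\<in>nbhd E i. w i j * p j t)" by (simp add: p_def citer.simps(2))
      have "sqrt (P i (Suc t)) = sg i (Suc t)" using sgpos i by (simp add: P_def less_imp_le)
      also have "\<dots> = (\<Sum>j\<in>nbhd E i. w i j * sg j t)" by (simp add: sg_def citer.simps(2))
      also have "\<dots> = (\<Sum>j\<in>nbhd E i. w i j * sqrt (P j t))"
        using sgpos nbn by (intro sum.cong refl) (simp add: P_def less_imp_le)
      finally show "sqrt (P i (Suc t)) = (\<Sum>j\<in>nbhd E i. w i j * sqrt (P j t))" .
    qed
    have c3: "\<forall>t. \<forall>i<n. P i t > 0 \<and> \<mu> i t = gaussian (p i t) (P i t)"
      using gauss sgpos by (simp add: P_def) (metis less_irrefl)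
    show ?thesis using c1 c2 c3 by blast
  qed
  have n1: "n \<ge> 1" by (rule C0.n1)
  define F where "F = (\<lambda>\<eta>. (1 / real n) * (\<Sum>j<n. (W2 \<eta> (\<mu> j 0))\<^sup>2))"
  have Feq: "F = (\<lambda>\<eta>. \<Sum>j<n. (1 / real n) * (W2 \<eta> (gaussian (p0 j) ((s0 j)\<^sup>2)))\<^sup>2)"
    unfolding F_def sum_distrib_left using gauss[of 0]
    by (intro ext sum.cong refl) (simp add: p_def sg_def)
  define ms where "ms = (\<Sum>j<n. (1 / real n) * p0 j)"
  define ss where "ss = (\<Sum>j<n. (1 / real n) * s0 j)"
  have bar_hyps: "finite {..<n}" "\<And>j. j \<in> {..<n} \<Longrightarrow> (1 / real n) \<ge> 0" "(\<Sum>j<n. 1 / real n) = 1"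
    "0 \<in> {..<n}" "(1 / real n) > 0" "\<And>j. j \<in> {..<n} \<Longrightarrow> s0 j > 0"
    using n1 init_pos by (auto simp: s0_def)
  have amin: "is_argmin_U2 F (gaussian ms (ss\<^sup>2))"
    unfolding Feq ms_def ss_def by (rule bary(1)[OF bar_hyps])
  have uniq: "\<And>\<eta>. is_argmin_U2 F \<eta> \<Longrightarrow> \<eta> = gaussian ms (ss\<^sup>2)"
    unfolding Feq ms_def ss_def by (rule bary(2)[OF bar_hyps])
  have part3: "\<forall>\<mu>s. is_argmin_U2 F \<mu>s \<longrightarrow>
           (\<forall>i<n. \<exists>C \<rho>. C > 0 \<and> 0 < \<rho> \<and> \<rho> < 1 \<and> (\<forall>t. W2 (\<mu> i t) \<mu>s \<le> C * \<rho> ^ t))"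
  proof (intro allI impI)
    fix \<mu>s i assume a: "is_argmin_U2 F \<mu>s" and i: "i < n"
    have mus: "\<mu>s = gaussian ms (ss\<^sup>2)" by (rule uniq[OF a])
    have ssp: "ss > 0"
    proof -
      have "(1 / real n) * s0 0 \<le> ss" unfolding ss_def
        by (rule member_le_sum[where f = "\<lambda>j. (1 / real n) * s0 j"]) (use bar_hyps in \<open>auto intro: less_imp_le\<close>)
      moreover have "(1 / real n) * s0 0 > 0" using bar_hyps by simp
      ultimately show ?thesis by simp
    qed
    obtain C1 r1 where c1: "C1 > 0" "0 < r1" "r1 < 1"
      and b1: "\<forall>t. \<forall>i<n. \<bar>citer w E p0 t i - (1 / real n) * (\<Sum>j<n. p0 j)\<bar> \<le> C1 * r1 ^ t"
      using cons.consensus[OF C, where xz=p0] by blast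
    obtain C2 r2 where c2: "C2 > 0" "0 < r2" "r2 < 1"
      and b2: "\<forall>t. \<forall>i<n. \<bar>citer w E s0 t i - (1 / real n) * (\<Sum>j<n. s0 j)\<bar> \<le> C2 * r2 ^ t"
      using cons.consensus[OF C, where xz=s0] by blast
    define r where "r = max r1 r2"
    have rr: "0 < r" "r < 1" using c1 c2 by (auto simp: r_def)
    have main: "W2 (\<mu> i t) \<mu>s \<le> (C1 + C2) * r ^ t" for t
    proof -
      have e: "(W2 (\<mu> i t) \<mu>s)\<^sup>2 = (p i t - ms)\<^sup>2 + (sg i t - ss)\<^sup>2"
        unfolding mus using gauss i sgpos ssp by (simp add: W2_gauss)
      have "W2 (\<mu> i t) \<mu>s = sqrt ((W2 (\<mu> i t) \<mu>s)\<^sup>2)" using W2_nn by simp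
      also have "\<dots> \<le> \<bar>p i t - ms\<bar> + \<bar>sg i t - ss\<bar>" unfolding e by (rule sqrt_sum_sq_le)
      also have "\<bar>p i t - ms\<bar> \<le> C1 * r ^ t"
      proof -
        have "\<bar>p i t - ms\<bar> \<le> C1 * r1 ^ t" using b1 i by (simp add: p_def ms_def sum_distrib_left)
        also have "\<dots> \<le> C1 * r ^ t" using c1 by (intro mult_left_mono power_mono) (auto simp: r_def)
        finally show ?thesis .
      qed
      also have "\<bar>sg i t - ss\<bar> \<le> C2 * r ^ t"
      proof -
        have "\<bar>sg i t - ss\<bar> \<le> C2 * r2 ^ t" using b2 i by (simp add: sg_def ss_def sum_distrib_left)
        also have "\<dots> \<le> C2 * r ^ t" using c2 by (intro mult_left_mono power_mono) (auto simp: r_def)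
        finally show ?thesis .
      qed
      finally show "W2 (\<mu> i t) \<mu>s \<le> (C1 + C2) * r ^ t" by (simp add: algebra_simps)
    qed
    show "\<exists>C \<rho>. C > 0 \<and> 0 < \<rho> \<and> \<rho> < 1 \<and> (\<forall>t. W2 (\<mu> i t) \<mu>s \<le> C * \<rho> ^ t)"
      using main rr c1 c2 by (intro exI[of _ "C1 + C2"] exI[of _ r]) auto
  qed
  show ?thesis using part1 amin part3 unfolding F_def by blast
qed

end
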